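(* Let $G$ be a very well-covered graph of girth at least $4$ (i.e., $G$ contains no triangle). Then the following are equivalent: (i) $\Psi(G)$ is a greedoid on $V(G)$; (ii) $G$ has a unique maximum matching (equivalently, since $G$ has a perfect matching, $G$ has a unique perfect matching).
   Context: All graphs are finite, simple, undirected. For $A\subseteq V(G)$, $N(A)=\{v\in V(G)-A: N(v)\cap A\neq\emptyset\}$ and $N[A]=A\cup N(A)$; $G[X]$ is the subgraph induced by $X$. A stable set is a set of pairwise non-adjacent vertices; $\alpha(G)$ is the maximum size of a stable set. $G$ is well-covered if all its maximal stable sets have the same cardinality, and very well-covered if it is well-covered, has no isolated vertices, and $|V(G)|=2\alpha(G)$. A set $A\subseteq V(G)$ is a local maximum stable set of $G$ if $A$ is a maximum stable set of $G[N[A]]$; $\Psi(G)$ denotes the family of all local maximum stable sets of $G$. A greedoid on a finite set $V$ is a non-empty family $\mathcal{F}\subseteq 2^V$ such that (Accessibility) every non-empty $X\in\mathcal{F}$ has an element $x\in X$ with $X-\{x\}\in\mathcal{F}$, and (Exchange) for all $X,Y\in\mathcal{F}$ with $|X|=|Y|+1$ there is $x\in X-Y$ with $Y\cup\{x\}\in\mathcal{F}$. *)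

theory Defs
  imports Main
begin

definition graph :: "'a set \<Rightarrow> 'a set set \<Rightarrow> bool" where
  "graph V E \<longleftrightarrow> finite V \<and> (\<forall>e\<in>E. \<exists>u v. e = {u, v} \<and> u \<noteq> v \<and> u \<in> V \<and> v \<in> V)"

definition adj :: "'a set set \<Rightarrow> 'a \<Rightarrow> 'a \<Rightarrow> bool" where
  "adj E u v \<longleftrightarrow> {u, v} \<in> E"

definition nbhd :: "'a set \<Rightarrow> 'a set set \<Rightarrow> 'a set \<Rightarrow> 'a set" where
  "nbhd V E A = {v \<in> V - A. \<exists>a\<in>A. adj E v a}"

definition cnbhd :: "'a set \<Rightarrow> 'a set set \<Rightarrow> 'a set \<Rightarrow> 'a set" where
  "cnbhd V E A = A \<union> nbhd V E A"

definition stable_in :: "'a set set \<Rightarrow> 'a set \<Rightarrow> 'a set \<Rightarrow> bool" where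
  "stable_in E X S \<longleftrightarrow> S \<subseteq> X \<and> (\<forall>u\<in>S. \<forall>v\<in>S. \<not> adj E u v)"

definition max_stable_in :: "'a set set \<Rightarrow> 'a set \<Rightarrow> 'a set \<Rightarrow> bool" where
  "max_stable_in E X S \<longleftrightarrow> stable_in E X S \<and> (\<forall>T. stable_in E X T \<longrightarrow> card T \<le> card S)"

definition maximal_stable_in :: "'a set set \<Rightarrow> 'a set \<Rightarrow> 'a set \<Rightarrow> bool" where
  "maximal_stable_in E X S \<longleftrightarrow> stable_in E X S \<and> (\<forall>T. stable_in E X T \<and> S \<subseteq> T \<longrightarrow> T = S)"

definition alpha :: "'a set \<Rightarrow> 'a set set \<Rightarrow> nat" where
  "alpha V E = Max (card ` {S. stable_in E V S})"

definition well_covered :: "'a set \<Rightarrow> 'a set set \<Rightarrow> bool" where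
  "well_covered V E \<longleftrightarrow> (\<forall>S. maximal_stable_in E V S \<longrightarrow> card S = alpha V E)"

definition very_well_covered :: "'a set \<Rightarrow> 'a set set \<Rightarrow> bool" where
  "very_well_covered V E \<longleftrightarrow> well_covered V E \<and> (\<forall>v\<in>V. \<exists>u\<in>V. adj E v u)
     \<and> card V = 2 * alpha V E"

definition triangle_free :: "'a set \<Rightarrow> 'a set set \<Rightarrow> bool" where
  "triangle_free V E \<longleftrightarrow> \<not> (\<exists>a\<in>V. \<exists>b\<in>V. \<exists>c\<in>V. adj E a b \<and> adj E b c \<and> adj E a c)"

definition local_max_stable :: "'a set \<Rightarrow> 'a set set \<Rightarrow> 'a set \<Rightarrow> bool" where
  "local_max_stable V E A \<longleftrightarrow> A \<subseteq> V \<and> max_stable_in E (cnbhd V E A) A"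

definition Psi :: "'a set \<Rightarrow> 'a set set \<Rightarrow> 'a set set" where
  "Psi V E = {A. local_max_stable V E A}"

definition greedoid :: "'a set \<Rightarrow> 'a set set \<Rightarrow> bool" where
  "greedoid V F \<longleftrightarrow> F \<noteq> {} \<and> F \<subseteq> Pow V
     \<and> (\<forall>X\<in>F. X \<noteq> {} \<longrightarrow> (\<exists>x\<in>X. X - {x} \<in> F))
     \<and> (\<forall>X\<in>F. \<forall>Y\<in>F. card X = card Y + 1 \<longrightarrow> (\<exists>x\<in>X - Y. Y \<union> {x} \<in> F))"

definition matching :: "'a set set \<Rightarrow> 'a set set \<Rightarrow> bool" where
  "matching E M \<longleftrightarrow> M \<subseteq> E \<and> (\<forall>e\<in>M. \<forall>f\<in>M. e \<noteq> f \<longrightarrow> e \<inter> f = {})"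

definition maximum_matching :: "'a set set \<Rightarrow> 'a set set \<Rightarrow> bool" where
  "maximum_matching E M \<longleftrightarrow> matching E M \<and> (\<forall>M'. matching E M' \<longrightarrow> card M' \<le> card M)"

end

theory Submission
  imports Defs
begin

lemma hall:
  fixes N :: "'i \<Rightarrow> 'b set"
  assumes "finite I" "\<forall>i\<in>I. finite (N i)" "\<forall>J\<subseteq>I. card J \<le> card (\<Union>(N ` J))"
  shows "\<exists>f. inj_on f I \<and> (\<forall>i\<in>I. f i \<in> N i)"
  using assms
proof (induction "card I" arbitrary: I N rule: less_induct)
  case less
  note fin = less.prems(1) and finN = less.prems(2) and H = less.prems(3)
  show ?case
  proof (cases "I = {}")
    case True then show ?thesis by auto
  next
    case nonempty: False
    show ?thesis
    proof (cases "\<exists>J. J \<subseteq> I \<and> J \<noteq> {} \<and> J \<noteq> I \<and> card (\<Union>(N ` J)) = card J")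
      case True
      then obtain J where J: "J \<subseteq> I" "J \<noteq> {}" "J \<noteq> I" "card (\<Union>(N ` J)) = card J" by blast
      have finJ: "finite J" using J(1) fin finite_subset by blast
      have cJ: "card J < card I" using J(1,3) fin by (meson psubsetI psubset_card_mono)
      have "\<exists>f. inj_on f J \<and> (\<forall>i\<in>J. f i \<in> N i)"
        by (rule less.hyps[OF cJ finJ]) (use finN H J(1) in auto)
      then obtain f1 where f1: "inj_on f1 J" "\<forall>i\<in>J. f1 i \<in> N i" by blast
      define U where "U = \<Union>(N ` J)"
      have finU: "finite U" unfolding U_def using finJ finN J(1) by blast
      define N2 where "N2 = (\<lambda>k. N k - U)"
      have "card J > 0" using finJ J(2) by (simp add: card_gt_0_iff)
      moreover have "card (I - J) = card I - card J" using finJ J(1) by (rule card_Diff_subset)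
      moreover have "card J \<le> card I" using J(1) fin by (rule card_mono[rotated])
      ultimately have cIJ: "card (I - J) < card I" by linarith
      have H2: "\<forall>K\<subseteq>I - J. card K \<le> card (\<Union>(N2 ` K))"
      proof (intro allI impI)
        fix K assume K: "K \<subseteq> I - J"
        have finK: "finite K" using K fin finite_subset by blast
        have eq: "\<Union>(N2 ` K) = \<Union>(N ` K) - U" unfolding N2_def by auto
        have un: "\<Union>(N ` (K \<union> J)) = (\<Union>(N ` K) - U) \<union> U" unfolding U_def by auto
        have finNK: "finite (\<Union>(N ` K))" using finK finN K by blast
        have "card (\<Union>(N ` (K \<union> J))) = card (\<Union>(N ` K) - U) + card U"
          unfolding un by (rule card_Un_disjoint) (use finNK finU in auto)
        moreover have "card (K \<union> J) \<le> card (\<Union>(N ` (K \<union> J)))" using H[rule_format, of "K \<union> J"] K J(1) by blast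
        moreover have "card (K \<union> J) = card K + card J"
          by (rule card_Un_disjoint) (use finK finJ K in auto)
        moreover have "card U = card J" using J(4) U_def by simp
        ultimately show "card K \<le> card (\<Union>(N2 ` K))" unfolding eq by linarith
      qed
      have "\<exists>f. inj_on f (I - J) \<and> (\<forall>i\<in>I - J. f i \<in> N2 i)"
        by (rule less.hyps[OF cIJ _ _ H2]) (use fin finN in \<open>auto simp: N2_def\<close>)
      then obtain f2 where f2: "inj_on f2 (I - J)" "\<forall>i\<in>I - J. f2 i \<in> N2 i" by blast
      define f where "f = (\<lambda>i. if i \<in> J then f1 i else f2 i)"
      have "inj_on f I"
      proof (rule inj_onI)
        fix x y assume xy: "x \<in> I" "y \<in> I" "f x = f y"
        show "x = y"
        proof (cases "x \<in> J"; cases "y \<in> J")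
          assume "x \<in> J" "y \<in> J" then show ?thesis using xy f1 unfolding f_def by (auto dest: inj_onD)
        next
          assume "x \<notin> J" "y \<notin> J" then show ?thesis using xy f2 unfolding f_def by (auto dest: inj_onD)
        next
          assume a: "x \<in> J" "y \<notin> J"
          then have "f x \<in> U" "f y \<notin> U" using f1 f2 xy unfolding f_def U_def N2_def by auto
          then show ?thesis using xy by simp
        next
          assume a: "x \<notin> J" "y \<in> J"
          have "f y \<in> U" using a f1 unfolding f_def U_def by auto
          moreover have "f x \<in> N2 x" using a f2 xy(1) unfolding f_def by auto
          then have "f x \<notin> U" unfolding N2_def by auto
          ultimately show ?thesis using xy by simp
        qed
      qed
      moreover have "\<forall>i\<in>I. f i \<in> N i" using f1 f2 unfolding f_def N2_def by auto
      ultimately show ?thesis by blast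
    next
      case False
      then have strict: "\<forall>J. J \<subseteq> I \<and> J \<noteq> {} \<and> J \<noteq> I \<longrightarrow> card J < card (\<Union>(N ` J))"
        using H by (metis le_neq_implies_less)
      obtain i where i: "i \<in> I" using nonempty by blast
      have "card {i} \<le> card (N i)" using H[rule_format, of "{i}"] i by simp
      then have "N i \<noteq> {}" by auto
      then obtain t where t: "t \<in> N i" by blast
      define N' where "N' = (\<lambda>j. N j - {t})"
      have cI': "card (I - {i}) < card I" using i fin by (meson card_Diff1_less)
      have H': "\<forall>J\<subseteq>I - {i}. card J \<le> card (\<Union>(N' ` J))"
      proof (intro allI impI)
        fix J assume J: "J \<subseteq> I - {i}"
        show "card J \<le> card (\<Union>(N' ` J))"
        proof (cases "J = {}")
          case True then show ?thesis by simp
        next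
          case False
          have finJ: "finite J" using J fin finite_subset by blast
          have "card J < card (\<Union>(N ` J))" using strict J False i by auto
          moreover have eqN: "\<Union>(N' ` J) = \<Union>(N ` J) - {t}" unfolding N'_def by auto
          moreover have "finite (\<Union>(N ` J))" using finJ finN J by blast
          then have "card (\<Union>(N ` J)) \<le> card (\<Union>(N ` J) - {t}) + 1"
            by (cases "t \<in> \<Union>(N ` J)") (auto simp: card_Diff_singleton_if)
          ultimately show ?thesis unfolding eqN by linarith
        qed
      qed
      have "\<exists>f. inj_on f (I - {i}) \<and> (\<forall>j\<in>I - {i}. f j \<in> N' j)"
        by (rule less.hyps[OF cI' _ _ H']) (use fin finN in \<open>auto simp: N'_def\<close>)
      then obtain f' where f': "inj_on f' (I - {i})" "\<forall>j\<in>I - {i}. f' j \<in> N' j" by blast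
      define f where "f = f'(i := t)"
      have "inj_on f I"
      proof (rule inj_onI)
        fix x y assume xy: "x \<in> I" "y \<in> I" "f x = f y"
        show "x = y"
          using xy f' unfolding f_def N'_def
          by (cases "x = i"; cases "y = i") (auto dest: inj_onD)
      qed
      moreover have "\<forall>j\<in>I. f j \<in> N j" using f' t unfolding f_def N'_def by auto
      ultimately show ?thesis by blast
    qed
  qed
qed

lemma adj_sym: "adj E u v = adj E v u"
  unfolding adj_def by (simp add: insert_commute)

lemma maximalI:
  assumes "stable_in E X S" "\<forall>v\<in>X - S. \<exists>s\<in>S. adj E v s"
  shows "maximal_stable_in E X S"
  unfolding maximal_stable_in_def
proof (intro conjI allI impI)
  show "stable_in E X S" by fact
  fix T assume T: "stable_in E X T \<and> S \<subseteq> T"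
  show "T = S"
  proof (rule ccontr)
    assume "T \<noteq> S"
    then obtain v where v: "v \<in> T" "v \<notin> S" using T by blast
    have "v \<in> X" using v T unfolding stable_in_def by blast
    then obtain s where s: "s \<in> S" "adj E v s" using assms(2) v by blast
    have "s \<in> T" using s T by blast
    then show False using T v(1) s(2) unfolding stable_in_def by blast
  qed
qed

locale vwc =
  fixes V :: "'a set" and E :: "'a set set"
  assumes G: "graph V E" and W: "very_well_covered V E"
begin

lemma finV: "finite V" using G unfolding graph_def by (rule conjunct1)

lemma E_all: "\<forall>e\<in>E. \<exists>u v. e = {u, v} \<and> u \<noteq> v \<and> u \<in> V \<and> v \<in> V"
  using G unfolding graph_def by (rule conjunct2)

lemma E_two4: "e \<in> E \<Longrightarrow> \<exists>u v. e = {u, v} \<and> u \<noteq> v \<and> u \<in> V \<and> v \<in> V"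
  using E_all by simp

lemma E_sub: "e \<in> E \<Longrightarrow> e \<subseteq> V"
proof -
  assume "e \<in> E"
  then obtain u v where "e = {u, v}" "u \<in> V" "v \<in> V" using E_two4 by blast
  then show ?thesis by simp
qed

lemma E_two: "e \<in> E \<Longrightarrow> \<exists>u v. e = {u, v} \<and> u \<noteq> v"
proof -
  assume "e \<in> E"
  then obtain u v where "e = {u, v}" "u \<noteq> v" using E_two4 by blast
  then show ?thesis by blast
qed

lemma finE: "finite E"
proof -
  have "E \<subseteq> Pow V" using E_sub by blast
  then show ?thesis by (rule finite_subset) (simp add: finV)
qed

lemma adj_irrefl: "\<not> adj E v v"
proof
  assume "adj E v v"
  then have "{v} \<in> E" unfolding adj_def by simp
  then obtain a b where "{v} = {a, b}" "a \<noteq> b" using E_two by blast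
  then show False by (metis insertI1 insert_commute singletonD)
qed

lemma adjV: "adj E u v \<Longrightarrow> u \<in> V \<and> v \<in> V" unfolding adj_def using E_sub by blast

lemma adj_neq: "adj E u v \<Longrightarrow> u \<noteq> v" using adj_irrefl by blast

lemma has_nb: "v \<in> V \<Longrightarrow> \<exists>u\<in>V. adj E v u"
  using W unfolding very_well_covered_def by blast

lemma cardV: "card V = 2 * alpha V E"
  using W unfolding very_well_covered_def by blast

lemma wc: "maximal_stable_in E V S \<Longrightarrow> card S = alpha V E"
  using W unfolding very_well_covered_def well_covered_def by blast

lemma stable_fin: "stable_in E V S \<Longrightarrow> finite S"
  unfolding stable_in_def using finV by (metis finite_subset)

lemma alpha_ge: "stable_in E V S \<Longrightarrow> card S \<le> alpha V E"
proof -
  assume S: "stable_in E V S"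
  have "{S. stable_in E V S} \<subseteq> Pow V" unfolding stable_in_def by blast
  then have "finite {S. stable_in E V S}" by (rule finite_subset) (simp add: finV)
  then show ?thesis unfolding alpha_def using S by (intro Max_ge) auto
qed

lemma extend:
  assumes "finite X" "stable_in E X S0"
  shows "\<exists>S. S0 \<subseteq> S \<and> maximal_stable_in E X S"
proof -
  have "\<exists>S. (stable_in E X S \<and> S0 \<subseteq> S) \<and> (\<forall>T. stable_in E X T \<and> S0 \<subseteq> T \<longrightarrow> card X - card S \<le> card X - card T)"
    by (rule ex_has_least_nat[of _ S0]) (use assms(2) in simp)
  then obtain S where S: "stable_in E X S \<and> S0 \<subseteq> S"
    and least: "\<forall>T. stable_in E X T \<and> S0 \<subseteq> T \<longrightarrow> card X - card S \<le> card X - card T"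
    by blast
  have "maximal_stable_in E X S"
    unfolding maximal_stable_in_def
  proof (intro conjI allI impI)
    show "stable_in E X S" using S by blast
    fix T assume T: "stable_in E X T \<and> S \<subseteq> T"
    then have "T \<subseteq> X" unfolding stable_in_def by blast
    then have fT: "finite T" "card T \<le> card X" using assms(1) by (auto intro: finite_subset card_mono)
    have "card X - card S \<le> card X - card T" using least T S by blast
    then have "card T \<le> card S" using fT by linarith
    then show "T = S" using card_seteq[OF fT(1), of S] T by blast
  qed
  then show ?thesis using S by blast
qed

lemma maximalD:
  assumes "maximal_stable_in E X S" "v \<in> X" "v \<notin> S"
  shows "\<exists>s\<in>S. adj E v s"
proof (rule ccontr)
  assume "\<not> ?thesis"
  then have "\<forall>s\<in>S. \<not> adj E v s \<and> \<not> adj E s v" by (metis adj_sym)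
  then have "stable_in E X (insert v S)" using assms adj_irrefl
    unfolding maximal_stable_in_def stable_in_def by auto
  then show False using assms unfolding maximal_stable_in_def by blast
qed

end

context vwc begin

lemma nbhd_sub: "nbhd V E A \<subseteq> V" unfolding nbhd_def by blast

lemma fin_nbhd: "finite (nbhd V E A)" using nbhd_sub finV by (rule finite_subset)

lemma stable_sub: "stable_in E X S \<Longrightarrow> S' \<subseteq> S \<Longrightarrow> stable_in E X S'"
  unfolding stable_in_def by blast

lemma hall_cond:
  assumes A: "stable_in E V A"
  shows "card A \<le> card (nbhd V E A)"
proof (rule ccontr)
  assume neg: "\<not> card A \<le> card (nbhd V E A)"
  define dfc :: "'a set \<Rightarrow> int" where "dfc X = int (card X) - int (card (nbhd V E X))" for X
  define Stb where "Stb = {X. stable_in E V X}"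
  have finStb: "finite Stb"
  proof -
    have "Stb \<subseteq> Pow V" unfolding Stb_def stable_in_def by blast
    then show ?thesis by (rule finite_subset) (simp add: finV)
  qed
  define dmax where "dmax = Max (dfc ` Stb)"
  have AS: "A \<in> Stb" using A unfolding Stb_def by simp
  have dmax_ge: "\<And>X. X \<in> Stb \<Longrightarrow> dfc X \<le> dmax" unfolding dmax_def using finStb by simp
  have "dmax \<in> dfc ` Stb" unfolding dmax_def using finStb AS by (intro Max_in) auto
  then obtain Y where Y: "Y \<in> Stb" "dfc Y = dmax" by blast
  have "\<exists>X. (X \<in> Stb \<and> dfc X = dmax) \<and> (\<forall>Z. Z \<in> Stb \<and> dfc Z = dmax \<longrightarrow> card X \<le> card Z)"
    by (rule ex_has_least_nat[of _ Y]) (use Y in simp)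
  then obtain A0 where A0: "A0 \<in> Stb" "dfc A0 = dmax"
    and minA0: "\<And>Z. Z \<in> Stb \<Longrightarrow> dfc Z = dmax \<Longrightarrow> card A0 \<le> card Z" by blast
  have A0st: "stable_in E V A0" using A0 unfolding Stb_def by simp
  have A0V: "A0 \<subseteq> V" and A0ind: "\<forall>x\<in>A0. \<forall>y\<in>A0. \<not> adj E x y" using A0st unfolding stable_in_def by auto
  have finA0: "finite A0" using A0st by (rule stable_fin)
  have "dfc A > 0" unfolding dfc_def using neg by simp
  then have dpos: "dfc A0 > 0" using dmax_ge[OF AS] A0 by simp
  define NA where "NA = nbhd V E A0"
  have finNA: "finite NA" unfolding NA_def by (rule fin_nbhd)
  have "card A0 > card NA" using dpos unfolding dfc_def NA_def by simp
  then have "A0 \<noteq> {}" by auto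
  then obtain a where a: "a \<in> A0" by blast
  then obtain u where u: "u \<in> V" "adj E a u" using has_nb A0V by blast
  have "u \<notin> A0" using u a A0ind by blast
  moreover have "adj E u a" using u(2) adj_sym by metis
  ultimately have uNA: "u \<in> NA" unfolding NA_def nbhd_def using u a by blast
  obtain B where "{} \<subseteq> B" and Bmax: "maximal_stable_in E NA B"
    using extend[OF finNA, of "{}"] unfolding stable_in_def by blast
  have Bst: "stable_in E NA B" using Bmax unfolding maximal_stable_in_def by blast
  have BNA: "B \<subseteq> NA" and Bind: "\<forall>x\<in>B. \<forall>y\<in>B. \<not> adj E x y" using Bst unfolding stable_in_def by auto
  have finB: "finite B" using BNA finNA by (rule finite_subset)
  have "B \<noteq> {}"
  proof
    assume "B = {}"
    then show False using maximalD[OF Bmax uNA] by simp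
  qed
  then obtain b0 where b0: "b0 \<in> B" by blast
  then have "b0 \<in> NA" using BNA by blast
  then obtain a0 where a0: "a0 \<in> A0" "adj E b0 a0" unfolding NA_def nbhd_def by blast
  define A1 where "A1 = {x \<in> A0. \<forall>b\<in>B. \<not> adj E x b}"
  have A1A0: "A1 \<subseteq> A0" unfolding A1_def by blast
  have "adj E a0 b0" using a0(2) adj_sym by metis
  then have "a0 \<notin> A1" unfolding A1_def using b0 by blast
  then have "A1 \<subset> A0" using A1A0 a0(1) by blast
  then have cA1: "card A1 < card A0" using finA0 by (rule psubset_card_mono[rotated])
  have A1st: "stable_in E V A1" using A0st A1A0 by (rule stable_sub)
  have nbA1: "nbhd V E A1 \<subseteq> NA - B"
  proof
    fix v assume v: "v \<in> nbhd V E A1"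
    then obtain a1 where a1: "a1 \<in> A1" "adj E v a1" "v \<in> V" "v \<notin> A1" unfolding nbhd_def by blast
    have "a1 \<in> A0" using a1 A1A0 by blast
    then have "v \<notin> A0" using a1(2) A0ind by blast
    then have "v \<in> NA" unfolding NA_def nbhd_def using a1 \<open>a1 \<in> A0\<close> by blast
    moreover have "v \<notin> B"
    proof
      assume "v \<in> B"
      then have "\<not> adj E a1 v" using a1(1) unfolding A1_def by blast
      then show False using a1(2) adj_sym by metis
    qed
    ultimately show "v \<in> NA - B" by blast
  qed
  have "card (nbhd V E A1) \<le> card (NA - B)" using nbA1 finNA by (intro card_mono) auto
  moreover have "card (NA - B) = card NA - card B" using finB BNA by (rule card_Diff_subset)
  moreover have "card B \<le> card NA" using BNA finNA by (rule card_mono[rotated])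
  ultimately have nA1: "card (nbhd V E A1) + card B \<le> card NA" by linarith
  have "A1 \<in> Stb" using A1st unfolding Stb_def by simp
  then have "dfc A1 \<le> dmax" using dmax_ge by blast
  moreover have "dfc A1 \<noteq> dmax" using minA0[OF \<open>A1 \<in> Stb\<close>] cA1 by fastforce
  ultimately have "dfc A1 < dfc A0" using A0 by simp
  then have key: "card A1 + card B < card A0" using nA1 unfolding dfc_def NA_def by linarith
  define W' where "W' = {w \<in> V. w \<notin> A0 \<and> w \<notin> NA \<and> (\<forall>b\<in>B. \<not> adj E w b)}"
  have finW': "finite W'" unfolding W'_def using finV by simp
  obtain T where "{} \<subseteq> T" and Tmax: "maximal_stable_in E W' T"
    using extend[OF finW', of "{}"] unfolding stable_in_def by blast
  have TW': "T \<subseteq> W'" and Tind: "\<forall>x\<in>T. \<forall>y\<in>T. \<not> adj E x y"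
    using Tmax unfolding maximal_stable_in_def stable_in_def by auto
  have finT: "finite T" using TW' finW' by (rule finite_subset)
  have A1ind: "\<forall>x\<in>A1. \<forall>y\<in>A1. \<not> adj E x y" using A1A0 A0ind by blast
  have BA1: "\<forall>x\<in>B. \<forall>y\<in>A1. \<not> adj E x y \<and> \<not> adj E y x"
    unfolding A1_def by (metis (mono_tags, lifting) adj_sym mem_Collect_eq)
  have BT: "\<forall>x\<in>B. \<forall>y\<in>T. \<not> adj E x y \<and> \<not> adj E y x"
  proof (intro ballI)
    fix x y assume "x \<in> B" "y \<in> T"
    then have "\<not> adj E y x" using TW' unfolding W'_def by blast
    then show "\<not> adj E x y \<and> \<not> adj E y x" using adj_sym by metis
  qed
  have A0T: "\<forall>x\<in>A0. \<forall>y\<in>T. \<not> adj E x y \<and> \<not> adj E y x"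
  proof (intro ballI)
    fix x y assume xy: "x \<in> A0" "y \<in> T"
    have "\<not> adj E y x"
    proof
      assume "adj E y x"
      then have "y \<in> NA" unfolding NA_def nbhd_def using xy TW' unfolding W'_def by blast
      then show False using xy TW' unfolding W'_def by blast
    qed
    then show "\<not> adj E x y \<and> \<not> adj E y x" using adj_sym by metis
  qed
  define X where "X = B \<union> A1 \<union> T"
  have XV: "X \<subseteq> V" unfolding X_def using BNA A1A0 A0V TW' nbhd_sub unfolding NA_def W'_def by blast
  have Xind: "\<forall>x\<in>X. \<forall>y\<in>X. \<not> adj E x y"
    unfolding X_def using Bind A1ind Tind BA1 BT A0T A1A0 by blast
  have Xmax: "maximal_stable_in E V X"
  proof (rule maximalI)
    show "stable_in E V X" unfolding stable_in_def using XV Xind by blast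
    show "\<forall>v\<in>V - X. \<exists>s\<in>X. adj E v s"
    proof
      fix v assume v: "v \<in> V - X"
      show "\<exists>s\<in>X. adj E v s"
      proof (cases "v \<in> A0")
        case True
        then have "v \<notin> A1" using v unfolding X_def by blast
        then obtain b where "b \<in> B" "adj E v b" using True unfolding A1_def by blast
        then show ?thesis unfolding X_def by blast
      next
        case nA0: False
        show ?thesis
        proof (cases "v \<in> NA")
          case True
          then obtain b where "b \<in> B" "adj E v b" using maximalD[OF Bmax True] v unfolding X_def by blast
          then show ?thesis unfolding X_def by blast
        next
          case nNA: False
          show ?thesis
          proof (cases "\<exists>b\<in>B. adj E v b")
            case True
            then show ?thesis unfolding X_def by blast
          next
            case False
            then have "v \<in> W'" unfolding W'_def using v nA0 nNA by blast
            moreover have "v \<notin> T" using v unfolding X_def by blast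
            ultimately obtain t where "t \<in> T" "adj E v t" using maximalD[OF Tmax] by blast
            then show ?thesis unfolding X_def by blast
          qed
        qed
      qed
    qed
  qed
  have "card X = alpha V E" using Xmax by (rule wc)
  moreover have "card X \<le> card B + card A1 + card T"
    unfolding X_def by (metis add_le_mono card_Un_le le_trans order_refl)
  moreover have "card (A0 \<union> T) \<le> alpha V E"
  proof (rule alpha_ge)
    show "stable_in E V (A0 \<union> T)" unfolding stable_in_def
      using A0V TW' A0ind Tind A0T unfolding W'_def by blast
  qed
  moreover have "card (A0 \<union> T) = card A0 + card T"
    by (rule card_Un_disjoint) (use finA0 finT TW' in \<open>auto simp: W'_def\<close>)
  ultimately show False using key by linarith
qed


lemma perfect_ex: "\<exists>M. matching E M \<and> \<Union>M = V"
proof -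
  obtain S where "{} \<subseteq> S" and Smax: "maximal_stable_in E V S"
    using extend[OF finV, of "{}"] unfolding stable_in_def by blast
  have SV: "S \<subseteq> V" and Sind: "\<forall>x\<in>S. \<forall>y\<in>S. \<not> adj E x y"
    using Smax unfolding maximal_stable_in_def stable_in_def by auto
  have finS: "finite S" using SV finV by (rule finite_subset)
  define N where "N s = {t \<in> V. adj E s t}" for s
  have "\<exists>f. inj_on f S \<and> (\<forall>i\<in>S. f i \<in> N i)"
  proof (rule hall[OF finS])
    show "\<forall>i\<in>S. finite (N i)" unfolding N_def using finV by simp
    show "\<forall>J\<subseteq>S. card J \<le> card (\<Union>(N ` J))"
    proof (intro allI impI)
      fix J assume J: "J \<subseteq> S"
      have Jst: "stable_in E V J" using Smax J unfolding maximal_stable_in_def by (meson stable_sub)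
      have "nbhd V E J \<subseteq> \<Union>(N ` J)"
      proof
        fix v assume "v \<in> nbhd V E J"
        then obtain a where "a \<in> J" "adj E v a" "v \<in> V" unfolding nbhd_def by blast
        moreover have "adj E a v" using \<open>adj E v a\<close> adj_sym by metis
        ultimately show "v \<in> \<Union>(N ` J)" unfolding N_def by blast
      qed
      moreover have "finite (\<Union>(N ` J))" using finV unfolding N_def by (rule rev_finite_subset) blast
      ultimately have "card (nbhd V E J) \<le> card (\<Union>(N ` J))" by (rule card_mono[rotated])
      then show "card J \<le> card (\<Union>(N ` J))" using hall_cond[OF Jst] by linarith
    qed
  qed
  then obtain f where finj: "inj_on f S" and fN: "\<forall>i\<in>S. f i \<in> N i" by blast
  have fadj: "\<And>s. s \<in> S \<Longrightarrow> adj E s (f s) \<and> f s \<in> V" using fN unfolding N_def by blast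
  have fout: "\<And>s. s \<in> S \<Longrightarrow> f s \<notin> S" using fadj Sind by blast
  have fim: "f ` S \<subseteq> V - S" using fadj fout by blast
  have "card (f ` S) = card S" using finj by (rule card_image)
  also have "\<dots> = alpha V E" using Smax by (rule wc)
  also have "\<dots> = card (V - S)" using cardV card_Diff_subset[OF finS SV] wc[OF Smax] by simp
  finally have "f ` S = V - S" using fim finV by (intro card_subset_eq) auto
  define M where "M = (\<lambda>s. {s, f s}) ` S"
  have "matching E M"
    unfolding matching_def
  proof (intro conjI ballI impI)
    show "M \<subseteq> E" unfolding M_def using fadj unfolding adj_def by blast
    fix e g assume e: "e \<in> M" and g: "g \<in> M" and ne: "e \<noteq> g"
    obtain s where s: "s \<in> S" "e = {s, f s}" using e unfolding M_def by auto
    obtain s' where s': "s' \<in> S" "g = {s', f s'}" using g unfolding M_def by auto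
    have "s \<noteq> s'" using s s' ne by auto
    moreover have "f s \<noteq> f s'" using \<open>s \<noteq> s'\<close> finj s(1) s'(1) by (meson inj_onD)
    moreover have "s \<noteq> f s'" "f s \<noteq> s'" using fout s s' by blast+
    ultimately show "e \<inter> g = {}" using s s' by auto
  qed
  moreover have "\<Union>M = V"
  proof -
    have "\<Union>M = S \<union> f ` S" unfolding M_def by auto
    then show ?thesis using \<open>f ` S = V - S\<close> SV by auto
  qed
  ultimately show ?thesis by blast
qed

lemma matching_sub: "matching E M \<Longrightarrow> M \<subseteq> E"
  unfolding matching_def by (rule conjunct1)

lemma matching_disj: "matching E M \<Longrightarrow> e \<in> M \<Longrightarrow> g \<in> M \<Longrightarrow> e \<noteq> g \<Longrightarrow> e \<inter> g = {}"
  unfolding matching_def by blast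

lemma matching_fin: "matching E M \<Longrightarrow> finite M"
proof -
  assume "matching E M"
  then have "M \<subseteq> E" by (rule matching_sub)
  then show ?thesis using finE by (rule finite_subset)
qed

lemma matching_Union: "matching E M \<Longrightarrow> \<Union>M \<subseteq> V"
proof -
  assume "matching E M"
  then have "M \<subseteq> E" by (rule matching_sub)
  then show ?thesis using E_sub by (meson Sup_least subset_iff)
qed

lemma card_Union_matching:
  assumes "matching E M" shows "card (\<Union>M) = 2 * card M"
proof -
  have "pairwise disjnt M" unfolding pairwise_def disjnt_def
  proof (intro ballI impI)
    fix x y assume "x \<in> M" "y \<in> M" "x \<noteq> y"
    then show "x \<inter> y = {}" by (rule matching_disj[OF assms])
  qed
  moreover have "\<And>e. e \<in> M \<Longrightarrow> finite e"
  proof -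
    fix e assume "e \<in> M"
    then have "e \<subseteq> V" using matching_sub[OF assms] E_sub by blast
    then show "finite e" using finV by (rule finite_subset)
  qed
  ultimately have "card (\<Union>M) = sum card M" by (rule card_Union_disjoint)
  also have "\<dots> = sum (\<lambda>_. 2) M"
  proof (rule sum.cong)
    fix e assume "e \<in> M"
    then have "e \<in> E" using matching_sub[OF assms] by blast
    then obtain u v where "e = {u, v}" "u \<noteq> v" using E_two by blast
    then show "card e = 2" by simp
  qed simp
  finally show ?thesis by simp
qed

lemma perfect_max:
  assumes "matching E M" "\<Union>M = V" shows "maximum_matching E M"
  unfolding maximum_matching_def
proof (intro conjI allI impI)
  show "matching E M" by fact
  fix M' assume M': "matching E M'"
  have "card (\<Union>M') \<le> card V" using matching_Union[OF M'] finV by (rule card_mono[rotated])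
  moreover have "card V = 2 * card M" using card_Union_matching[OF assms(1)] assms(2) by simp
  ultimately show "card M' \<le> card M" using card_Union_matching[OF M'] by linarith
qed

lemma max_perfect:
  assumes "maximum_matching E M'" "matching E M" "\<Union>M = V"
  shows "\<Union>M' = V"
proof -
  have M': "matching E M'" using assms(1) unfolding maximum_matching_def by blast
  have "card M \<le> card M'" using assms unfolding maximum_matching_def by blast
  moreover have "card V = 2 * card M" using card_Union_matching[OF assms(2)] assms(3) by simp
  ultimately have "card V \<le> card (\<Union>M')" using card_Union_matching[OF M'] by linarith
  moreover have "card (\<Union>M') \<le> card V" using matching_Union[OF M'] finV by (rule card_mono[rotated])
  ultimately show ?thesis using matching_Union[OF M'] finV by (intro card_subset_eq) auto
qed

definition mate :: "'a set set \<Rightarrow> 'a \<Rightarrow> 'a" where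
  "mate M v = (THE u. {v, u} \<in> M)"

lemma matching_same:
  assumes "matching E M" "{v, u} \<in> M" "{v, u'} \<in> M" shows "u = u'"
proof -
  have "{v, u} = {v, u'}"
  proof (rule ccontr)
    assume "{v, u} \<noteq> {v, u'}"
    then have "{v, u} \<inter> {v, u'} = {}" using matching_disj[OF assms(1,2,3)] by blast
    then show False by blast
  qed
  then show ?thesis by (auto simp: doubleton_eq_iff)
qed

lemma mate_unique: "matching E M \<Longrightarrow> {v, u} \<in> M \<Longrightarrow> mate M v = u"
  unfolding mate_def by (rule the_equality) (auto intro: matching_same)

end

context vwc begin

lemma mate_in:
  assumes M: "matching E M" "\<Union>M = V" and v: "v \<in> V"
  shows "{v, mate M v} \<in> M"
proof -
  obtain e where e: "e \<in> M" "v \<in> e" using v M(2) by blast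
  have "e \<in> E" using e(1) matching_sub[OF M(1)] by blast
  then obtain x y where xy: "e = {x, y}" using E_two by blast
  show ?thesis
  proof (cases "v = x")
    case True
    then have "{v, y} \<in> M" using e xy by simp
    then show ?thesis using mate_unique[OF M(1)] by simp
  next
    case False
    then have "v = y" using e xy by simp
    then have "{v, x} \<in> M" using e xy by (simp add: insert_commute)
    then show ?thesis using mate_unique[OF M(1)] by simp
  qed
qed

lemma mate_adj:
  assumes M: "matching E M" "\<Union>M = V" and v: "v \<in> V"
  shows "adj E v (mate M v)"
  using mate_in[OF M v] matching_sub[OF M(1)] unfolding adj_def by blast

lemma mate_V:
  assumes M: "matching E M" "\<Union>M = V" and v: "v \<in> V"
  shows "mate M v \<in> V"
  using adjV[OF mate_adj[OF M v]] by simp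

lemma mate_neq:
  assumes M: "matching E M" "\<Union>M = V" and v: "v \<in> V"
  shows "mate M v \<noteq> v"
  using adj_neq[OF mate_adj[OF M v]] by simp

lemma mate_mate:
  assumes M: "matching E M" "\<Union>M = V" and v: "v \<in> V"
  shows "mate M (mate M v) = v"
proof -
  have "{mate M v, v} \<in> M" using mate_in[OF M v] by (simp add: insert_commute)
  then show ?thesis by (rule mate_unique[OF M(1)])
qed

lemma mate_inj:
  assumes M: "matching E M" "\<Union>M = V" and "u \<in> V" "v \<in> V" "mate M u = mate M v"
  shows "u = v"
  using mate_mate[OF M] assms(3-5) by metis

lemma edge_mate:
  assumes M: "matching E M" "\<Union>M = V" and e: "e \<in> M" "v \<in> e"
  shows "e = {v, mate M v}"
proof -
  have "v \<in> V" using e M(2) by blast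
  have "{v, mate M v} \<in> M" using mate_in[OF M \<open>v \<in> V\<close>] .
  moreover have "v \<in> e \<inter> {v, mate M v}" using e by blast
  ultimately show ?thesis using matching_disj[OF M(1) e(1)] by blast
qed

lemma matching_eqI:
  assumes M: "matching E M" "\<Union>M = V" and M': "matching E M'" "\<Union>M' = V"
    and eq: "\<forall>v\<in>V. mate M' v = mate M v"
  shows "M' = M"
proof -
  have sub: "\<And>A B. matching E A \<Longrightarrow> \<Union>A = V \<Longrightarrow> matching E B \<Longrightarrow> \<Union>B = V \<Longrightarrow>
     \<forall>v\<in>V. mate A v = mate B v \<Longrightarrow> A \<subseteq> B"
  proof
    fix A B e assume A: "matching E A" "\<Union>A = V" and B: "matching E B" "\<Union>B = V"
      and q: "\<forall>v\<in>V. mate A v = mate B v" and e: "e \<in> A"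
    have "e \<in> E" using e matching_sub[OF A(1)] by blast
    then obtain x y where xy: "e = {x, y}" using E_two by blast
    then have "x \<in> e" by simp
    then have "e = {x, mate A x}" using edge_mate[OF A e] by simp
    moreover have "x \<in> V" using \<open>x \<in> e\<close> e A(2) by blast
    ultimately have "e = {x, mate B x}" using q by simp
    then show "e \<in> B" using mate_in[OF B \<open>x \<in> V\<close>] by simp
  qed
  show ?thesis using sub[OF M' M eq] sub[OF M M'] eq by auto
qed

lemma hit:
  assumes M: "matching E M" "\<Union>M = V" and S: "maximal_stable_in E V S" and v: "v \<in> V"
  shows "v \<in> S \<or> mate M v \<in> S"
proof (rule ccontr)
  assume neg: "\<not> (v \<in> S \<or> mate M v \<in> S)"
  have SV: "S \<subseteq> V" and Sind: "\<forall>x\<in>S. \<forall>y\<in>S. \<not> adj E x y"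
    using S unfolding maximal_stable_in_def stable_in_def by auto
  define \<phi> where "\<phi> s = {s, mate M s}" for s
  have inj: "inj_on \<phi> S"
  proof (rule inj_onI)
    fix s s' assume ss: "s \<in> S" "s' \<in> S" "\<phi> s = \<phi> s'"
    then have "s = s' \<or> (s = mate M s' \<and> mate M s = s')" unfolding \<phi>_def doubleton_eq_iff by blast
    moreover have "\<not> (s = mate M s')"
    proof
      assume "s = mate M s'"
      then have "adj E s' s" using mate_adj[OF M] ss SV by blast
      then show False using Sind ss by blast
    qed
    ultimately show "s = s'" by blast
  qed
  have im: "\<phi> ` S \<subseteq> M - {{v, mate M v}}"
  proof
    fix e assume "e \<in> \<phi> ` S"
    then obtain s where s: "s \<in> S" "e = {s, mate M s}" unfolding \<phi>_def by auto
    have "e \<in> M" using mate_in[OF M] s SV by auto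
    moreover have "e \<noteq> {v, mate M v}"
    proof
      assume "e = {v, mate M v}"
      then have "s \<in> {v, mate M v}" using s by (metis insertI1)
      then show False using neg s by auto
    qed
    ultimately show "e \<in> M - {{v, mate M v}}" by simp
  qed
  have finM: "finite M" using matching_fin[OF M(1)] .
  have "card S = card (\<phi> ` S)" using inj by (simp add: card_image)
  also have "\<dots> \<le> card (M - {{v, mate M v}})" using im finM by (intro card_mono) auto
  also have "\<dots> = card M - 1" using mate_in[OF M v] finM by simp
  finally have "card S \<le> card M - 1" .
  moreover have "card S = alpha V E" using S by (rule wc)
  moreover have "2 * card M = 2 * alpha V E" using card_Union_matching[OF M(1)] M(2) cardV by simp
  moreover have "card M > 0" using mate_in[OF M v] finM by (auto simp: card_gt_0_iff)
  ultimately show False by linarith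
qed

end

lemma cycle_lemma:
  assumes "finite D" "D \<noteq> {}" "g ` D \<subseteq> D"
  shows "\<exists>C\<subseteq>D. C \<noteq> {} \<and> g ` C = C"
proof -
  have "\<exists>C. (C \<subseteq> D \<and> C \<noteq> {} \<and> g ` C \<subseteq> C) \<and> (\<forall>C'. C' \<subseteq> D \<and> C' \<noteq> {} \<and> g ` C' \<subseteq> C' \<longrightarrow> card C \<le> card C')"
    by (rule ex_has_least_nat[of _ D]) (use assms in simp)
  then obtain C where C: "C \<subseteq> D" "C \<noteq> {}" "g ` C \<subseteq> C"
    and min0: "\<forall>C'. C' \<subseteq> D \<and> C' \<noteq> {} \<and> g ` C' \<subseteq> C' \<longrightarrow> card C \<le> card C'" by blast
  have min: "\<And>C'. C' \<subseteq> D \<Longrightarrow> C' \<noteq> {} \<Longrightarrow> g ` C' \<subseteq> C' \<Longrightarrow> card C \<le> card C'"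
    using min0 by simp
  have finC: "finite C" using C(1) assms(1) by (rule finite_subset)
  have "g ` C \<subseteq> D" using C by blast
  moreover have "g ` C \<noteq> {}" using C(2) by simp
  moreover have "g ` (g ` C) \<subseteq> g ` C" using C(3) by blast
  ultimately have "card C \<le> card (g ` C)" by (rule min)
  moreover have "card (g ` C) \<le> card C" using finC C(3) by (rule card_mono)
  ultimately have "card (g ` C) = card C" by linarith
  then have "g ` C = C" using card_subset_eq[OF finC C(3)] by blast
  then show ?thesis using C by blast
qed

locale pm = vwc +
  fixes M :: "'a set set"
  assumes Mm: "matching E M" and MV: "\<Union>M = V"
begin

abbreviation m where "m \<equiv> mate M"

lemmas mm = mate_mate[OF Mm MV] and madj = mate_adj[OF Mm MV] and mV = mate_V[OF Mm MV]
  and mneq = mate_neq[OF Mm MV] and minj = mate_inj[OF Mm MV] and min = mate_in[OF Mm MV]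

definition closed :: "'a set \<Rightarrow> bool" where
  "closed A \<longleftrightarrow> (\<forall>a\<in>A. \<forall>w. adj E a w \<longrightarrow> m w \<in> A)"

lemma Psi_D:
  assumes "A \<in> Psi V E"
  shows "stable_in E V A \<and> closed A"
proof -
  have AV: "A \<subseteq> V" and mx: "max_stable_in E (cnbhd V E A) A"
    using assms unfolding Psi_def local_max_stable_def by auto
  have Aind: "\<forall>x\<in>A. \<forall>y\<in>A. \<not> adj E x y" using mx unfolding max_stable_in_def stable_in_def by blast
  have Ast: "stable_in E V A" unfolding stable_in_def using AV Aind by blast
  have finA: "finite A" using AV finV by (rule finite_subset)
  have "closed A" unfolding closed_def
  proof (intro ballI allI impI)
    fix a w assume a: "a \<in> A" and aw: "adj E a w"
    show "m w \<in> A"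
    proof (rule ccontr)
      assume nw: "m w \<notin> A"
      have wV: "w \<in> V" using adjV[OF aw] by simp
      have wA: "w \<notin> A" using Aind a aw by blast
      have "stable_in E V {w}" unfolding stable_in_def using wV adj_irrefl by simp
      then obtain S where wS: "{w} \<subseteq> S" and Smax: "maximal_stable_in E V S"
        using extend[OF finV] by blast
      have SV: "S \<subseteq> V" and Sind: "\<forall>x\<in>S. \<forall>y\<in>S. \<not> adj E x y"
        using Smax unfolding maximal_stable_in_def stable_in_def by auto
      define g where "g x = (if x \<in> S then x else m x)" for x
      have gS: "\<And>x. x \<in> A \<Longrightarrow> g x \<in> S" unfolding g_def using hit[OF Mm MV Smax] AV by auto
      have gN: "\<And>x. x \<in> A \<Longrightarrow> g x \<in> cnbhd V E A"
      proof -
        fix x assume x: "x \<in> A"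
        show "g x \<in> cnbhd V E A"
        proof (cases "x \<in> S")
          case True then show ?thesis unfolding g_def cnbhd_def using x by simp
        next
          case False
          have xV: "x \<in> V" using x AV by blast
          have "m x \<notin> A" using Aind x madj[OF xV] by blast
          moreover have "adj E (m x) x" using madj[OF xV] adj_sym by metis
          ultimately have "m x \<in> nbhd V E A" unfolding nbhd_def using mV[OF xV] x by blast
          then show ?thesis unfolding g_def cnbhd_def using False by simp
        qed
      qed
      have gw: "\<And>x. x \<in> A \<Longrightarrow> g x \<noteq> w"
      proof -
        fix x assume x: "x \<in> A"
        show "g x \<noteq> w"
        proof (cases "x \<in> S")
          case True then show ?thesis unfolding g_def using x wA by auto
        next
          case False
          have xV: "x \<in> V" using x AV by blast
          show ?thesis
          proof
            assume "g x = w"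
            then have "m x = w" unfolding g_def using False by simp
            then have "m w = x" using mm[OF xV] by simp
            then show False using nw x by simp
          qed
        qed
      qed
      have ginj: "inj_on g A"
      proof (rule inj_onI)
        fix x y assume x: "x \<in> A" and y: "y \<in> A" and gxy: "g x = g y"
        have xV: "x \<in> V" and yV: "y \<in> V" using x y AV by auto
        show "x = y"
        proof (cases "x \<in> S"; cases "y \<in> S")
          assume "x \<in> S" "y \<in> S" then show ?thesis using gxy unfolding g_def by simp
        next
          assume "x \<notin> S" "y \<notin> S" then show ?thesis using gxy minj[OF xV yV] unfolding g_def by simp
        next
          assume "x \<in> S" "y \<notin> S"
          then have "x = m y" using gxy unfolding g_def by simp
          then have "adj E y x" using madj[OF yV] by simp
          then show ?thesis using Aind x y by blast
        next
          assume "x \<notin> S" "y \<in> S"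
          then have "y = m x" using gxy unfolding g_def by simp
          then have "adj E x y" using madj[OF xV] by simp
          then show ?thesis using Aind x y by blast
        qed
      qed
      define T where "T = S \<inter> cnbhd V E A"
      have "adj E w a" using aw adj_sym by metis
      then have "w \<in> nbhd V E A" unfolding nbhd_def using wV wA a by blast
      then have wT: "w \<in> T" unfolding T_def cnbhd_def using wS by blast
      have Tst: "stable_in E (cnbhd V E A) T" unfolding T_def stable_in_def using Sind by blast
      have finT: "finite T" unfolding T_def using finite_subset[OF SV finV] by blast
      have sub: "insert w (g ` A) \<subseteq> T" using wT gS gN unfolding T_def by blast
      have "w \<notin> g ` A" using gw by blast
      then have "card (insert w (g ` A)) = card (g ` A) + 1" using finA by simp
      then have "card (insert w (g ` A)) = card A + 1" using ginj by (simp add: card_image)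
      moreover have "card (insert w (g ` A)) \<le> card T" using sub finT by (rule card_mono[rotated])
      moreover have "card T \<le> card A" using mx Tst unfolding max_stable_in_def by blast
      ultimately show False by linarith
    qed
  qed
  then show ?thesis using Ast by blast
qed

lemma Psi_I:
  assumes Ast: "stable_in E V A" and cl: "closed A"
  shows "A \<in> Psi V E"
proof -
  have AV: "A \<subseteq> V" and Aind: "\<forall>x\<in>A. \<forall>y\<in>A. \<not> adj E x y" using Ast unfolding stable_in_def by auto
  have finA: "finite A" using AV finV by (rule finite_subset)
  have "max_stable_in E (cnbhd V E A) A"
    unfolding max_stable_in_def
  proof (intro conjI allI impI)
    show "stable_in E (cnbhd V E A) A" unfolding stable_in_def cnbhd_def using Aind by blast
    fix T assume Tst: "stable_in E (cnbhd V E A) T"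
    have TN: "T \<subseteq> cnbhd V E A" and Tind: "\<forall>x\<in>T. \<forall>y\<in>T. \<not> adj E x y" using Tst unfolding stable_in_def by auto
    have TV: "T \<subseteq> V" using TN AV nbhd_sub unfolding cnbhd_def by blast
    define g where "g x = (if x \<in> A then x else m x)" for x
    have gA: "g ` T \<subseteq> A"
    proof
      fix y assume "y \<in> g ` T"
      then obtain t where t: "t \<in> T" "y = g t" by blast
      show "y \<in> A"
      proof (cases "t \<in> A")
        case True then show ?thesis using t unfolding g_def by simp
      next
        case False
        then have "t \<in> nbhd V E A" using t TN unfolding cnbhd_def by blast
        then obtain a where "a \<in> A" "adj E t a" unfolding nbhd_def by blast
        moreover have "adj E a t" using \<open>adj E t a\<close> adj_sym by metis
        ultimately have "m t \<in> A" using cl unfolding closed_def by blast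
        then show ?thesis using t False unfolding g_def by simp
      qed
    qed
    have ginj: "inj_on g T"
    proof (rule inj_onI)
      fix x y assume x: "x \<in> T" and y: "y \<in> T" and gxy: "g x = g y"
      have xV: "x \<in> V" and yV: "y \<in> V" using x y TV by auto
      show "x = y"
      proof (cases "x \<in> A"; cases "y \<in> A")
        assume "x \<in> A" "y \<in> A" then show ?thesis using gxy unfolding g_def by simp
      next
        assume "x \<notin> A" "y \<notin> A" then show ?thesis using gxy minj[OF xV yV] unfolding g_def by simp
      next
        assume "x \<in> A" "y \<notin> A"
        then have "x = m y" using gxy unfolding g_def by simp
        then have "adj E y x" using madj[OF yV] by simp
        then show ?thesis using Tind x y by blast
      next
        assume "x \<notin> A" "y \<in> A"
        then have "y = m x" using gxy unfolding g_def by simp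
        then have "adj E x y" using madj[OF xV] by simp
        then show ?thesis using Tind x y by blast
      qed
    qed
    have "card T = card (g ` T)" using ginj by (simp add: card_image)
    also have "\<dots> \<le> card A" using gA finA by (rule card_mono[rotated])
    finally show "card T \<le> card A" .
  qed
  then show ?thesis unfolding Psi_def local_max_stable_def using AV by simp
qed

lemma Psi_iff: "A \<in> Psi V E \<longleftrightarrow> stable_in E V A \<and> closed A"
  using Psi_D Psi_I by blast

lemma maxS_Psi:
  assumes Smax: "maximal_stable_in E V S" shows "S \<in> Psi V E"
proof (rule Psi_I)
  show Sst: "stable_in E V S" using Smax unfolding maximal_stable_in_def by blast
  have Sind: "\<forall>x\<in>S. \<forall>y\<in>S. \<not> adj E x y" using Sst unfolding stable_in_def by blast
  show "closed S" unfolding closed_def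
  proof (intro ballI allI impI)
    fix a w assume a: "a \<in> S" and aw: "adj E a w"
    have "w \<notin> S" using Sind a aw by blast
    moreover have "w \<in> V" using adjV[OF aw] by simp
    ultimately show "m w \<in> S" using hit[OF Mm MV Smax] by blast
  qed
qed

end

context pm begin

lemma swap:
  assumes CV: "C \<subseteq> V" and Cne: "C \<noteq> {}" and mC: "\<forall>c\<in>C. m c \<notin> C"
    and hb: "bij_betw h C C" and hc: "\<forall>c\<in>C. h c \<noteq> c \<and> adj E (h c) (m c)"
  shows "\<exists>M'. matching E M' \<and> \<Union>M' = V \<and> M' \<noteq> M"
proof -
  have hC: "\<And>c. c \<in> C \<Longrightarrow> h c \<in> C" using hb bij_betwE by blast
  have hinj: "inj_on h C" using hb unfolding bij_betw_def by blast
  have himg: "h ` C = C" using hb unfolding bij_betw_def by blast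
  define R where "R = (\<lambda>c. {c, m c}) ` C"
  define Ad where "Ad = (\<lambda>c. {h c, m c}) ` C"
  define M' where "M' = (M - R) \<union> Ad"
  have AdE: "Ad \<subseteq> E"
  proof
    fix e assume "e \<in> Ad"
    then obtain c where c: "c \<in> C" "e = {h c, m c}" unfolding Ad_def by auto
    then show "e \<in> E" using hc unfolding adj_def by simp
  qed
  have ME: "M \<subseteq> E" using matching_sub[OF Mm] .
  have cross: "\<And>e f. e \<in> M - R \<Longrightarrow> f \<in> Ad \<Longrightarrow> e \<inter> f = {}"
  proof -
    fix e f assume e: "e \<in> M - R" and f: "f \<in> Ad"
    obtain c where c: "c \<in> C" "f = {h c, m c}" using f unfolding Ad_def by auto
    have cV: "c \<in> V" using c CV by blast
    show "e \<inter> f = {}"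
    proof (rule ccontr)
      assume "e \<inter> f \<noteq> {}"
      then obtain x where x: "x \<in> e" "x \<in> f" by blast
      have eM: "e \<in> M" using e by simp
      have ex: "e = {x, m x}" using edge_mate[OF Mm MV eM x(1)] .
      have "x = h c \<or> x = m c" using x(2) c(2) by simp
      then show False
      proof
        assume "x = h c"
        then have "e = {h c, m (h c)}" using ex by simp
        then have "e \<in> R" using hC[OF c(1)] unfolding R_def by auto
        then show False using e by simp
      next
        assume "x = m c"
        then have "e = {m c, m (m c)}" using ex by simp
        then have "e = {c, m c}" using mm[OF cV] by (simp add: insert_commute)
        then have "e \<in> R" using c(1) unfolding R_def by auto
        then show False using e by simp
      qed
    qed
  qed
  have addis: "\<And>e f. e \<in> Ad \<Longrightarrow> f \<in> Ad \<Longrightarrow> e \<noteq> f \<Longrightarrow> e \<inter> f = {}"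
  proof -
    fix e f assume e: "e \<in> Ad" and f: "f \<in> Ad" and ne: "e \<noteq> f"
    obtain c where c: "c \<in> C" "e = {h c, m c}" using e unfolding Ad_def by auto
    obtain d where d: "d \<in> C" "f = {h d, m d}" using f unfolding Ad_def by auto
    have cd: "c \<noteq> d" using c d ne by auto
    have cV: "c \<in> V" "d \<in> V" using c d CV by auto
    have "h c \<noteq> h d" using cd hinj c(1) d(1) by (meson inj_onD)
    moreover have "m c \<noteq> m d" using cd minj[OF cV] by auto
    moreover have "h c \<noteq> m d" using hC[OF c(1)] mC d(1) by auto
    moreover have "m c \<noteq> h d" using hC[OF d(1)] mC c(1) by auto
    ultimately show "e \<inter> f = {}" using c(2) d(2) by auto
  qed
  have Mmat: "matching E M'"
    unfolding matching_def
  proof (intro conjI ballI impI)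
    show "M' \<subseteq> E" unfolding M'_def using ME AdE by blast
    fix e f assume e: "e \<in> M'" and f: "f \<in> M'" and ne: "e \<noteq> f"
    show "e \<inter> f = {}"
    proof (cases "e \<in> Ad"; cases "f \<in> Ad")
      assume "e \<in> Ad" "f \<in> Ad" then show ?thesis using addis ne by blast
    next
      assume a: "e \<in> Ad" "f \<notin> Ad"
      then have "f \<in> M - R" using f unfolding M'_def by blast
      then have "f \<inter> e = {}" using cross a(1) by blast
      then show ?thesis by blast
    next
      assume a: "e \<notin> Ad" "f \<in> Ad"
      then have "e \<in> M - R" using e unfolding M'_def by blast
      then show ?thesis using cross a(2) by blast
    next
      assume "e \<notin> Ad" "f \<notin> Ad"
      then have "e \<in> M" "f \<in> M" using e f unfolding M'_def by auto
      then show ?thesis using matching_disj[OF Mm] ne by blast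
    qed
  qed
  have "\<Union>M' = V"
  proof
    show "\<Union>M' \<subseteq> V" using matching_Union[OF Mmat] .
    show "V \<subseteq> \<Union>M'"
    proof
      fix v assume v: "v \<in> V"
      show "v \<in> \<Union>M'"
      proof (cases "v \<in> C")
        case True
        then have "v \<in> h ` C" using himg by simp
        then obtain c where c: "c \<in> C" "v = h c" by blast
        then have "{h c, m c} \<in> M'" unfolding M'_def Ad_def by blast
        then show ?thesis using c(2) by blast
      next
        case nC: False
        show ?thesis
        proof (cases "\<exists>c\<in>C. v = m c")
          case True
          then obtain c where c: "c \<in> C" "v = m c" by blast
          then have "{h c, m c} \<in> M'" unfolding M'_def Ad_def by blast
          then show ?thesis using c(2) by blast
        next
          case False
          have "{v, m v} \<notin> R"
          proof
            assume "{v, m v} \<in> R"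
            then obtain c where c: "c \<in> C" "{v, m v} = {c, m c}" unfolding R_def by auto
            then have "v = c \<or> v = m c" by (metis doubleton_eq_iff)
            then show False using nC False c(1) by blast
          qed
          then have "{v, m v} \<in> M'" using min[OF v] unfolding M'_def by blast
          then show ?thesis by blast
        qed
      qed
    qed
  qed
  moreover have "M' \<noteq> M"
  proof
    assume eq: "M' = M"
    obtain c where c: "c \<in> C" using Cne by blast
    have cV: "c \<in> V" using c CV by blast
    have "{h c, m c} \<in> M'" using c unfolding M'_def Ad_def by blast
    then have inM: "{h c, m c} \<in> M" using eq by simp
    have "m c \<in> {h c, m c}" by simp
    then have "{h c, m c} = {m c, m (m c)}" using edge_mate[OF Mm MV inM] by blast
    then have "{h c, m c} = {m c, c}" using mm[OF cV] by simp
    then have "h c = c \<or> m c = c" by (metis doubleton_eq_iff)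
    then show False using hc c mneq[OF cV] by blast
  qed
  ultimately show ?thesis using Mmat by blast
qed

lemma no_swap:
  assumes uniq: "\<forall>M'. maximum_matching E M' \<longrightarrow> M' = M"
    and CV: "C \<subseteq> V" and Cne: "C \<noteq> {}" and mC: "\<forall>c\<in>C. m c \<notin> C"
    and hb: "bij_betw h C C" and hc: "\<forall>c\<in>C. h c \<noteq> c \<and> adj E (h c) (m c)"
  shows False
proof -
  obtain M' where M': "matching E M'" "\<Union>M' = V" "M' \<noteq> M" using swap[OF CV Cne mC hb hc] by blast
  have "maximum_matching E M'" using perfect_max[OF M'(1,2)] .
  then show False using uniq M'(3) by blast
qed

end

context pm begin

lemma unique_greedoid:
  assumes uniq: "\<forall>M'. maximum_matching E M' \<longrightarrow> M' = M"
  shows "greedoid V (Psi V E)"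
  unfolding greedoid_def
proof (intro conjI ballI impI)
  have "{} \<in> Psi V E" by (rule Psi_I) (auto simp: stable_in_def closed_def)
  then show "Psi V E \<noteq> {}" by blast
  show "Psi V E \<subseteq> Pow V" unfolding Psi_def local_max_stable_def by blast
next
  fix A assume A: "A \<in> Psi V E" and Ane: "A \<noteq> {}"
  show "\<exists>x\<in>A. A - {x} \<in> Psi V E"
  proof (rule ccontr)
    assume neg: "\<not> ?thesis"
    have Ast: "stable_in E V A" and Acl: "closed A" using Psi_D[OF A] by auto
    have AV: "A \<subseteq> V" and Aind: "\<forall>x\<in>A. \<forall>y\<in>A. \<not> adj E x y" using Ast unfolding stable_in_def by auto
    have finA: "finite A" using AV finV by (rule finite_subset)
    have pred: "\<forall>a\<in>A. \<exists>b. b \<in> A \<and> b \<noteq> a \<and> adj E b (m a)"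
    proof
      fix a assume a: "a \<in> A"
      have "A - {a} \<notin> Psi V E" using neg a by blast
      moreover have "stable_in E V (A - {a})" using Ast by (rule stable_sub) blast
      ultimately have "\<not> closed (A - {a})" using Psi_I by blast
      then obtain b w where b: "b \<in> A - {a}" "adj E b w" "m w \<notin> A - {a}" unfolding closed_def by blast
      have "m w \<in> A" using Acl b unfolding closed_def by blast
      then have mw: "m w = a" using b(3) by blast
      have wV: "w \<in> V" using adjV[OF b(2)] by simp
      then have "w = m a" using mm[OF wV] mw by simp
      then show "\<exists>b. b \<in> A \<and> b \<noteq> a \<and> adj E b (m a)" using b by blast
    qed
    from bchoice[OF pred] obtain g where g: "\<forall>a\<in>A. g a \<in> A \<and> g a \<noteq> a \<and> adj E (g a) (m a)" by blast
    have "g ` A \<subseteq> A" using g by blast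
    then obtain C where C: "C \<subseteq> A" "C \<noteq> {}" "g ` C = C" using cycle_lemma[OF finA Ane \<open>g ` A \<subseteq> A\<close>] by blast
    have finC: "finite C" using C(1) finA by (rule finite_subset)
    have "inj_on g C" using finC C(3) by (intro finite_surj_inj) auto
    then have hb: "bij_betw g C C" using C(3) unfolding bij_betw_def by blast
    show False
    proof (rule no_swap[OF uniq _ C(2) _ hb])
      show "C \<subseteq> V" using C(1) AV by blast
      show "\<forall>c\<in>C. m c \<notin> C"
      proof
        fix c assume c: "c \<in> C"
        have "adj E c (m c)" using madj c C(1) AV by blast
        then show "m c \<notin> C" using Aind c C(1) by blast
      qed
      show "\<forall>c\<in>C. g c \<noteq> c \<and> adj E (g c) (m c)" using g C(1) by blast
    qed
  qed
next
  fix X Y assume X: "X \<in> Psi V E" and Y: "Y \<in> Psi V E" and cXY: "card X = card Y + 1"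
  show "\<exists>x\<in>X - Y. Y \<union> {x} \<in> Psi V E"
  proof (rule ccontr)
    assume neg: "\<not> ?thesis"
    have Xst: "stable_in E V X" and Xcl: "closed X" using Psi_D[OF X] by auto
    have Yst: "stable_in E V Y" and Ycl: "closed Y" using Psi_D[OF Y] by auto
    have XV: "X \<subseteq> V" and Xind: "\<forall>x\<in>X. \<forall>y\<in>X. \<not> adj E x y" using Xst unfolding stable_in_def by auto
    have YV: "Y \<subseteq> V" and Yind: "\<forall>x\<in>Y. \<forall>y\<in>Y. \<not> adj E x y" using Yst unfolding stable_in_def by auto
    have finX: "finite X" using XV finV by (rule finite_subset)
    have finY: "finite Y" using YV finV by (rule finite_subset)
    define D where "D = {x \<in> X - Y. m x \<notin> Y}"
    define P where "P = {x \<in> X - Y. m x \<in> Y}"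
    have XYDP: "X - Y = D \<union> P" unfolding D_def P_def by blast
    have mP: "m ` P \<subseteq> Y - X"
    proof
      fix z assume "z \<in> m ` P"
      then obtain x where x: "x \<in> P" "z = m x" by blast
      have xX: "x \<in> X" and xV: "x \<in> V" using x(1) XV unfolding P_def by auto
      have "m x \<notin> X" using Xind xX madj[OF xV] by blast
      then show "z \<in> Y - X" using x unfolding P_def by blast
    qed
    have "inj_on m P" by (rule inj_onI) (use minj XV in \<open>auto simp: P_def\<close>)
    then have "card P = card (m ` P)" by (simp add: card_image)
    also have "\<dots> \<le> card (Y - X)" using mP finY by (intro card_mono) auto
    finally have cP: "card P \<le> card (Y - X)" .
    have "card (X - Y) = card X - card (X \<inter> Y)" using finX by (simp add: card_Diff_subset_Int)
    moreover have "card (Y - X) = card Y - card (Y \<inter> X)" using finY by (simp add: card_Diff_subset_Int)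
    moreover have "card (X \<inter> Y) \<le> card Y" using finY by (intro card_mono) auto
    moreover have "Y \<inter> X = X \<inter> Y" by blast
    ultimately have cXmY: "card (X - Y) = card (Y - X) + 1" using cXY by simp
    have "card (X - Y) \<le> card D + card P" unfolding XYDP by (rule card_Un_le)
    then have "D \<noteq> {}" using cP cXmY by auto
    have succ: "\<forall>x\<in>D. \<exists>b. b \<in> D \<and> b \<noteq> x \<and> adj E x (m b)"
    proof
      fix x assume x: "x \<in> D"
      have xX: "x \<in> X" and xY: "x \<notin> Y" and mxY: "m x \<notin> Y" using x unfolding D_def by auto
      have xV: "x \<in> V" using xX XV by blast
      have noadj: "\<And>y. y \<in> Y \<Longrightarrow> \<not> adj E y x"
      proof
        fix y assume y: "y \<in> Y" and yx: "adj E y x"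
        have "adj E y (m (m x))" using yx mm[OF xV] by simp
        then have "m (m x) \<in> Y \<Longrightarrow> True" by simp
        have "m (m (m x)) \<in> Y" using Ycl y \<open>adj E y (m (m x))\<close> unfolding closed_def by blast
        then have "m x \<in> Y" using mm[OF mV[OF xV]] by simp
        then show False using mxY by simp
      qed
      have "stable_in E V (Y \<union> {x})"
        unfolding stable_in_def
      proof (intro conjI ballI)
        show "Y \<union> {x} \<subseteq> V" using YV xV by blast
        fix u v assume u: "u \<in> Y \<union> {x}" and v: "v \<in> Y \<union> {x}"
        show "\<not> adj E u v"
        proof (cases "u = x"; cases "v = x")
          assume "u = x" "v = x" then show ?thesis using adj_irrefl by simp
        next
          assume a: "u = x" "v \<noteq> x"
          then have "v \<in> Y" using v by blast
          then have "\<not> adj E v x" by (rule noadj)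
          then show ?thesis using a adj_sym by metis
        next
          assume a: "u \<noteq> x" "v = x"
          then have "u \<in> Y" using u by blast
          then show ?thesis using a noadj by blast
        next
          assume a: "u \<noteq> x" "v \<noteq> x"
          then show ?thesis using u v Yind by blast
        qed
      qed
      moreover have "Y \<union> {x} \<notin> Psi V E" using neg x unfolding D_def by blast
      ultimately have "\<not> closed (Y \<union> {x})" using Psi_I by blast
      then obtain z w where z: "z \<in> Y \<union> {x}" "adj E z w" "m w \<notin> Y \<union> {x}" unfolding closed_def by blast
      have "z \<notin> Y"
      proof
        assume "z \<in> Y"
        then have "m w \<in> Y" using Ycl z(2) unfolding closed_def by blast
        then show False using z(3) by blast
      qed
      then have zx: "z = x" using z(1) by blast
      have xw: "adj E x w" using z(2) zx by simp
      have wV: "w \<in> V" using adjV[OF xw] by simp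
      have bX: "m w \<in> X" using Xcl xX xw unfolding closed_def by blast
      have wY: "w \<notin> Y"
      proof
        assume "w \<in> Y"
        moreover have "adj E w x" using xw adj_sym by metis
        ultimately show False using noadj by blast
      qed
      have "m w \<in> D" unfolding D_def using bX z(3) wY mm[OF wV] by auto
      moreover have "m w \<noteq> x" using z(3) by blast
      moreover have "adj E x (m (m w))" using xw mm[OF wV] by simp
      ultimately show "\<exists>b. b \<in> D \<and> b \<noteq> x \<and> adj E x (m b)" by blast
    qed
    from bchoice[OF succ] obtain g where g: "\<forall>x\<in>D. g x \<in> D \<and> g x \<noteq> x \<and> adj E x (m (g x))" by blast
    have finD: "finite D" using finX unfolding D_def by simp
    have "g ` D \<subseteq> D" using g by blast
    then obtain C where C: "C \<subseteq> D" "C \<noteq> {}" "g ` C = C" using cycle_lemma[OF finD \<open>D \<noteq> {}\<close> \<open>g ` D \<subseteq> D\<close>] by blast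
    have finC: "finite C" using C(1) finD by (rule finite_subset)
    have "inj_on g C" using finC C(3) by (intro finite_surj_inj) auto
    then have gb: "bij_betw g C C" using C(3) unfolding bij_betw_def by blast
    define h where "h = inv_into C g"
    have hb: "bij_betw h C C" unfolding h_def using gb by (rule bij_betw_inv_into)
    have CX: "C \<subseteq> X" using C(1) unfolding D_def by blast
    show False
    proof (rule no_swap[OF uniq _ C(2) _ hb])
      show "C \<subseteq> V" using CX XV by blast
      show "\<forall>c\<in>C. m c \<notin> C"
      proof
        fix c assume c: "c \<in> C"
        have "adj E c (m c)" using madj c CX XV by blast
        then show "m c \<notin> C" using Xind c CX by blast
      qed
      show "\<forall>c\<in>C. h c \<noteq> c \<and> adj E (h c) (m c)"
      proof
        fix c assume c: "c \<in> C"
        then have cg: "c \<in> g ` C" using C(3) by simp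
        have hC: "h c \<in> C" unfolding h_def using cg by (rule inv_into_into)
        have ghc: "g (h c) = c" unfolding h_def using cg by (rule f_inv_into_f)
        have hD: "h c \<in> D" using hC C(1) by blast
        have "adj E (h c) (m (g (h c)))" using g hD by blast
        then have "adj E (h c) (m c)" using ghc by simp
        moreover have "h c \<noteq> c"
        proof
          assume "h c = c"
          then have "g c = c" using ghc by simp
          then show False using g hD \<open>h c = c\<close> by auto
        qed
        ultimately show "h c \<noteq> c \<and> adj E (h c) (m c)" by blast
      qed
    qed
  qed
qed


lemma greedoid_unique:
  assumes gr: "greedoid V (Psi V E)" and M': "maximum_matching E M'"
  shows "M' = M"
proof (rule ccontr)
  assume ne: "M' \<noteq> M"
  have acc: "\<forall>X\<in>Psi V E. X \<noteq> {} \<longrightarrow> (\<exists>x\<in>X. X - {x} \<in> Psi V E)"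
    using gr unfolding greedoid_def by (elim conjE)
  have M'm: "matching E M'" using M' unfolding maximum_matching_def by (rule conjunct1)
  have M'V: "\<Union>M' = V" using max_perfect[OF M' Mm MV] .
  define m' where "m' = mate M'"
  define D where "D = {y \<in> V. m' y \<noteq> m y}"
  have "D \<noteq> {}"
  proof
    assume "D = {}"
    then have "\<forall>v\<in>V. mate M' v = mate M v" unfolding D_def m'_def by blast
    then have "M' = M" by (rule matching_eqI[OF Mm MV M'm M'V])
    then show False using ne by simp
  qed
  define f where "f y = m (m' y)" for y
  have fD: "\<And>y. y \<in> D \<Longrightarrow> f y \<in> D \<and> f y \<noteq> y \<and> adj E y (m' y)"
  proof -
    fix y assume y: "y \<in> D"
    have yV: "y \<in> V" and ny: "m' y \<noteq> m y" using y unfolding D_def by auto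
    have m'V: "m' y \<in> V" using mate_V[OF M'm M'V yV] unfolding m'_def .
    have fV: "f y \<in> V" unfolding f_def using mV[OF m'V] .
    have mf: "m (f y) = m' y" unfolding f_def using mm[OF m'V] .
    have fy: "f y \<noteq> y"
    proof
      assume "f y = y"
      then have "m y = m' y" using mf by simp
      then show False using ny by simp
    qed
    have "m' (f y) \<noteq> m (f y)"
    proof
      assume "m' (f y) = m (f y)"
      then have "m' (f y) = m' y" using mf by simp
      then have "f y = y" using mate_inj[OF M'm M'V fV yV] unfolding m'_def by blast
      then show False using fy by simp
    qed
    then have "f y \<in> D" unfolding D_def using fV by blast
    moreover have "adj E y (m' y)" using mate_adj[OF M'm M'V yV] unfolding m'_def .
    ultimately show "f y \<in> D \<and> f y \<noteq> y \<and> adj E y (m' y)" using fy by blast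
  qed
  have claim: "X \<in> Psi V E \<Longrightarrow> X \<inter> D = {}" for X
  proof (induction "card X" arbitrary: X rule: less_induct)
    case less
    show ?case
    proof (cases "X = {}")
      case True then show ?thesis by simp
    next
      case False
      then obtain x where x: "x \<in> X" "X - {x} \<in> Psi V E" using acc less.prems by blast
      have XV: "X \<subseteq> V" using less.prems unfolding Psi_def local_max_stable_def by blast
      have finX: "finite X" using XV finV by (rule finite_subset)
      have "card (X - {x}) < card X" using finX x(1) by (rule card_Diff1_less)
      then have IH: "(X - {x}) \<inter> D = {}" using less.hyps x(2) by blast
      show ?thesis
      proof (rule ccontr)
        assume "X \<inter> D \<noteq> {}"
        then obtain y where y: "y \<in> X" "y \<in> D" by blast
        then have yx: "y = x" using IH by blast
        have Xcl: "closed X" using Psi_D[OF less.prems] by blast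
        have "adj E y (m' y)" using fD[OF y(2)] by blast
        then have "f y \<in> X" using Xcl y(1) unfolding closed_def f_def by blast
        moreover have "f y \<in> D" "f y \<noteq> y" using fD[OF y(2)] by auto
        ultimately show False using IH yx by blast
      qed
    qed
  qed
  obtain y where y: "y \<in> D" using \<open>D \<noteq> {}\<close> by blast
  have yV: "y \<in> V" using y unfolding D_def by blast
  have "stable_in E V {y}" unfolding stable_in_def using yV adj_irrefl by simp
  then obtain S where yS: "{y} \<subseteq> S" and Smax: "maximal_stable_in E V S" using extend[OF finV] by blast
  have "S \<in> Psi V E" using Smax by (rule maxS_Psi)
  then have "S \<inter> D = {}" by (rule claim)
  then show False using yS y by blast
qed

end

theorem theorem10:
  fixes V :: "'a set" and E :: "'a set set"
  assumes "graph V E"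
    and "very_well_covered V E"
    and "triangle_free V E"
  shows "greedoid V (Psi V E) \<longleftrightarrow> (\<exists>!M. maximum_matching E M)"
proof -
  interpret vwc V E using assms(1,2) by (rule vwc.intro)
  obtain M0 where M0: "matching E M0" "\<Union>M0 = V" using perfect_ex by blast
  interpret pm V E M0 by (rule pm.intro, rule vwc_axioms, rule pm_axioms.intro, rule M0(1), rule M0(2))
  have mx: "maximum_matching E M0" using perfect_max[OF M0] .
  show ?thesis
  proof
    assume gr: "greedoid V (Psi V E)"
    show "\<exists>!M. maximum_matching E M"
    proof (rule ex1I[of _ M0])
      show "maximum_matching E M0" by (rule mx)
      fix M assume "maximum_matching E M"
      then show "M = M0" by (rule greedoid_unique[OF gr])
    qed
  next
    assume u: "\<exists>!M. maximum_matching E M"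
    have "\<forall>M'. maximum_matching E M' \<longrightarrow> M' = M0"
    proof (intro allI impI)
      fix M' assume "maximum_matching E M'"
      then show "M' = M0" using u mx by blast
    qed
    then show "greedoid V (Psi V E)" by (rule unique_greedoid)
  qed
qed

end
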